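(* For $i=1,2$ let $\mathbf{L}_i=(L_i,\le)$ be a finite nontrivial join-semilattice with greatest element $1$ and let $(R_i,\vee,\circ)$ be a subsemiring of $(\mathrm{JM}(\mathbf{L}_i),\vee,\circ)$ such that $k_a\in R_i$ for all $a\in L_i$, every $f\in R_i$ satisfies $k_a\le f$ for some $a\in L_i$, and for all $a\in L_i$, $b\in L_i\setminus\{1\}$ there exists $f\in R_i$ with $f(x)=b$ for $x\le a$ and $f(x)>b$ otherwise. If $(R_1,\vee,\circ)$ and $(R_2,\vee,\circ)$ are isomorphic semirings, then $\mathbf{L}_1$ and $\mathbf{L}_2$ are isomorphic.
   Context: For a finite join-semilattice $\mathbf{L}$, $\mathrm{JM}(\mathbf{L})$ is the set of maps $L\to L$ preserving binary joins, a semiring under pointwise join and composition, ordered pointwise. $k_a$ denotes the constant map with value $a$. *)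

theory Defs
  imports Main
begin

definition JM :: "('a::semilattice_sup \<Rightarrow> 'a) set" where
  "JM = {f. \<forall>x y. f (sup x y) = sup (f x) (f y)}"

definition kconst :: "'a \<Rightarrow> ('a \<Rightarrow> 'a)" where
  "kconst a = (\<lambda>_. a)"

definition subsemiring_JM :: "('a::semilattice_sup \<Rightarrow> 'a) set \<Rightarrow> bool" where
  "subsemiring_JM R \<longleftrightarrow> R \<subseteq> JM \<and>
     (\<forall>f\<in>R. \<forall>g\<in>R. (\<lambda>x. sup (f x) (g x)) \<in> R \<and> f \<circ> g \<in> R)"

definition admissible_R :: "('a::{semilattice_sup,order_top} \<Rightarrow> 'a) set \<Rightarrow> bool" where
  "admissible_R R \<longleftrightarrow> subsemiring_JM R \<and>
     (\<forall>a. kconst a \<in> R) \<and>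
     (\<forall>f\<in>R. \<exists>a. \<forall>x. kconst a x \<le> f x) \<and>
     (\<forall>a b. b \<noteq> top \<longrightarrow> (\<exists>f\<in>R. \<forall>x. (x \<le> a \<longrightarrow> f x = b) \<and> (\<not> x \<le> a \<longrightarrow> b < f x)))"

definition semiring_iso_JM ::
  "('a::semilattice_sup \<Rightarrow> 'a) set \<Rightarrow> ('b::semilattice_sup \<Rightarrow> 'b) set \<Rightarrow> bool" where
  "semiring_iso_JM R1 R2 \<longleftrightarrow> (\<exists>\<phi>. bij_betw \<phi> R1 R2 \<and>
     (\<forall>f\<in>R1. \<forall>g\<in>R1. \<phi> (\<lambda>x. sup (f x) (g x)) = (\<lambda>y. sup (\<phi> f y) (\<phi> g y)) \<and>
                      \<phi> (f \<circ> g) = \<phi> f \<circ> \<phi> g))"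

text \<open>Isomorphism of (join-semi)lattices = order isomorphism.\<close>
definition order_iso :: "('a::order \<Rightarrow> 'b::order) \<Rightarrow> bool" where
  "order_iso h \<longleftrightarrow> bij h \<and> (\<forall>x y. x \<le> y \<longleftrightarrow> h x \<le> h y)"

end

theory Submission
  imports Defs
begin

theorem proposition6p5:
  fixes R1 :: "('a::{finite,semilattice_sup,order_top} \<Rightarrow> 'a) set"
    and R2 :: "('b::{finite,semilattice_sup,order_top} \<Rightarrow> 'b) set"
  assumes "\<exists>x y :: 'a. x \<noteq> y"
    and "\<exists>x y :: 'b. x \<noteq> y"
    and "admissible_R R1"
    and "admissible_R R2"
    and "semiring_iso_JM R1 R2"
  shows "\<exists>h :: 'a \<Rightarrow> 'b. order_iso h"
proof -
  have K1: "\<And>a. kconst a \<in> R1" using assms(3) unfolding admissible_R_def by blast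
  have K2: "\<And>a. kconst a \<in> R2" using assms(4) unfolding admissible_R_def by blast
  have C1: "\<And>f g. f \<in> R1 \<Longrightarrow> g \<in> R1 \<Longrightarrow> f \<circ> g \<in> R1"
    using assms(3) unfolding admissible_R_def subsemiring_JM_def by blast
  obtain \<phi> where bij: "bij_betw \<phi> R1 R2" and
    hom: "\<And>f g. f \<in> R1 \<Longrightarrow> g \<in> R1 \<Longrightarrow> \<phi> (\<lambda>x. sup (f x) (g x)) = (\<lambda>y. sup (\<phi> f y) (\<phi> g y)) \<and>
                      \<phi> (f \<circ> g) = \<phi> f \<circ> \<phi> g"
    using assms(5) unfolding semiring_iso_JM_def by blast
  have inj: "inj_on \<phi> R1" and surj: "\<phi> ` R1 = R2" using bij by (auto simp: bij_betw_def)
  define h where "h a = \<phi> (kconst a) top" for a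
  have phik: "\<phi> (kconst a) = kconst (h a)" for a
  proof
    fix y :: 'b
    have "kconst y \<in> \<phi> ` R1" using K2 surj by simp
    then obtain f where f: "f \<in> R1" "\<phi> f = kconst y" by (auto simp del: kconst_def)
    have "\<phi> (kconst a \<circ> f) = \<phi> (kconst a) \<circ> \<phi> f" using hom[OF K1 f(1)] by (rule conjunct2)
    moreover have "kconst a \<circ> f = kconst a" by (auto simp: kconst_def)
    ultimately have "\<phi> (kconst a) \<circ> kconst y = \<phi> (kconst a)" using f(2) by simp
    then have "(\<phi> (kconst a) \<circ> kconst y) top = \<phi> (kconst a) top" by (rule fun_cong)
    then have "\<phi> (kconst a) y = \<phi> (kconst a) top" by (simp add: kconst_def)
    then show "\<phi> (kconst a) y = kconst (h a) y" by (simp add: h_def kconst_def)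
  qed
  have hinj: "inj h"
  proof
    fix a b assume "h a = h b"
    then have "\<phi> (kconst a) = \<phi> (kconst b)" unfolding phik by simp
    then have "kconst a = kconst b" using inj K1 by (meson inj_onD)
    then have "kconst a top = kconst b top" by simp
    then show "a = b" by (simp add: kconst_def)
  qed
  have hsurj: "surj h"
  proof -
    { fix b
      have "kconst b \<in> \<phi> ` R1" using K2 surj by simp
      then obtain f where f: "f \<in> R1" "\<phi> f = kconst b" by auto
      have fc: "f = kconst (f top)"
      proof
        fix x
        have "\<phi> (f \<circ> kconst x) = \<phi> f \<circ> \<phi> (kconst x)" using hom[OF f(1) K1] by (rule conjunct2)
        also have "\<dots> = \<phi> f" using f(2) by (auto simp: kconst_def)
        finally have "f \<circ> kconst x = f"
          using inj_onD[OF inj _ C1[OF f(1) K1] f(1)] by blast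
        then have "(f \<circ> kconst x) top = f top" by (rule fun_cong)
        then show "f x = kconst (f top) x" by (simp add: kconst_def)
      qed
      have "h (f top) = \<phi> (kconst (f top)) top" by (simp add: h_def)
      also have "\<dots> = \<phi> f top" using fc by simp
      also have "\<dots> = b" using f(2) by (simp add: kconst_def)
      finally have "h (f top) = b" .
      then have "b \<in> range h" by blast }
    then show ?thesis by blast
  qed
  have hsup: "h (sup a b) = sup (h a) (h b)" for a b
  proof -
    have lam: "(\<lambda>x. sup (kconst a x) (kconst b x)) = kconst (sup a b)" by (simp add: kconst_def)
    have "kconst (h (sup a b)) = (\<lambda>y. sup (kconst (h a) y) (kconst (h b) y))"
      using hom[OF K1 K1, of a b] unfolding lam phik by blast
    then have "kconst (h (sup a b)) top = sup (kconst (h a) top) (kconst (h b) top)" by (rule fun_cong)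
    then show ?thesis by (simp add: kconst_def)
  qed
  have "order_iso h"
    unfolding order_iso_def
  proof (intro conjI allI)
    show "bij h" using hinj hsurj by (simp add: bij_def)
    fix x y :: 'a
    have "x \<le> y \<longleftrightarrow> sup x y = y" by (rule sup.absorb_iff2)
    also have "\<dots> \<longleftrightarrow> h (sup x y) = h y" using hinj by (simp add: inj_eq)
    also have "\<dots> \<longleftrightarrow> h x \<le> h y" by (simp add: hsup sup.absorb_iff2)
    finally show "x \<le> y \<longleftrightarrow> h x \<le> h y" .
  qed
  then show ?thesis by blast
qed

end
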